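(* Let $V$ be a real vector space of dimension $n$ and $1\le k\le n-1$. Let $E\subseteq V$ be a subspace, $A\subseteq \mathrm{Ann}(E)$ a subspace, and $\varepsilon: E\to \wedge^k V^*/A$ a linear map which is $E$-skew. Then $$L(E,A,\varepsilon)=\{X+\alpha \mid X\in E,\ \alpha + A=\varepsilon(X)\}\subseteq V\oplus \wedge^kV^*$$ is isotropic. Conversely, every isotropic subspace $L\subseteq V\oplus\wedge^kV^*$ is of the form $L(E,A_L,\varepsilon)$ with $E=\mathrm{pr}_1(L)$, $A_L=L\cap\wedge^kV^*$, and $\varepsilon:E\to\wedge^kV^*/A_L$ defined by $\varepsilon(X)=\alpha+A_L$ whenever $X+\alpha\in L$ (this $\varepsilon$ being well defined, linear and $E$-skew).
   Context: On $V\oplus\wedge^kV^*$ consider the symmetric $\wedge^{k-1}V^*$-valued pairing $\langle X+\alpha,Y+\beta\rangle=i_X\beta+i_Y\alpha$. For a subspace $L$, $L^\perp$ is its orthogonal with respect to this pairing, and $L$ is isotropic if $L\subseteq L^\perp$. $\mathrm{pr}_1,\mathrm{pr}_2$ denote the projections to $V$ and $\wedge^kV^*$. For $E\subseteq V$, $\mathrm{Ann}(E)=\{\alpha\in\wedge^kV^*\mid i_Y\alpha=0\ \forall Y\in E\}$. For $A\subseteq\mathrm{Ann}(E)$, let $\iota_E:\wedge^kV^*/A\to E^*\otimes\wedge^{k-1}V^*$, $\alpha+A\mapsto (X\mapsto i_X\alpha)$. A linear map $\varepsilon:E\to\wedge^kV^*/A$ is called $E$-skew if $\iota_E\circ\varepsilon\in\wedge^2E^*\otimes\wedge^{k-1}V^*$,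 i.e. $i_Y(\varepsilon(X))=-i_X(\varepsilon(Y))$ for all $X,Y\in E$. *)

theory Defs
  imports "HOL-Analysis.Analysis"
begin

text \<open>Forms of degree k on V: functions of a sequence of vectors that depend only
  on the first k entries, are linear in each of them, and vanish when two of the
  first k entries coincide (alternating).  The set of them is \<wedge>^k V^*.\<close>

type_synonym 'v form = "(nat \<Rightarrow> 'v) \<Rightarrow> real"

definition kform :: "nat \<Rightarrow> ('v::real_vector) form \<Rightarrow> bool" where
  "kform k \<alpha> \<longleftrightarrow>
     (\<forall>vs ws. (\<forall>i<k. vs i = ws i) \<longrightarrow> \<alpha> vs = \<alpha> ws) \<and>
     (\<forall>i<k. \<forall>vs. linear (\<lambda>x. \<alpha> (vs(i := x)))) \<and>
     (\<forall>vs i j. i < k \<and> j < k \<and> i \<noteq> j \<and> vs i = vs j \<longrightarrow> \<alpha> vs = 0)"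

definition fzero :: "'v form" where "fzero = (\<lambda>vs. 0)"
definition fadd :: "'v form \<Rightarrow> 'v form \<Rightarrow> 'v form" where
  "fadd \<alpha> \<beta> = (\<lambda>vs. \<alpha> vs + \<beta> vs)"
definition fscale :: "real \<Rightarrow> 'v form \<Rightarrow> 'v form" where
  "fscale c \<alpha> = (\<lambda>vs. c * \<alpha> vs)"
definition fneg :: "'v form \<Rightarrow> 'v form" where
  "fneg \<alpha> = (\<lambda>vs. - \<alpha> vs)"

definition contr :: "'v \<Rightarrow> 'v form \<Rightarrow> 'v form" where
  "contr X \<alpha> = (\<lambda>vs. \<alpha> (\<lambda>i. if i = 0 then X else vs (i - 1)))"

definition pairing :: "('v \<times> 'v form) \<Rightarrow> ('v \<times> 'v form) \<Rightarrow> 'v form" where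
  "pairing p q = fadd (contr (fst p) (snd q)) (contr (fst q) (snd p))"

definition form_subspace :: "nat \<Rightarrow> ('v::real_vector) form set \<Rightarrow> bool" where
  "form_subspace k A \<longleftrightarrow> (\<forall>\<alpha>\<in>A. kform k \<alpha>) \<and> fzero \<in> A \<and>
     (\<forall>\<alpha>\<in>A. \<forall>\<beta>\<in>A. fadd \<alpha> \<beta> \<in> A) \<and> (\<forall>c. \<forall>\<alpha>\<in>A. fscale c \<alpha> \<in> A)"

definition sum_subspace :: "nat \<Rightarrow> (('v::real_vector) \<times> 'v form) set \<Rightarrow> bool" where
  "sum_subspace k L \<longleftrightarrow> (\<forall>p\<in>L. kform k (snd p)) \<and> (0, fzero) \<in> L \<and>
     (\<forall>p\<in>L. \<forall>q\<in>L. (fst p + fst q, fadd (snd p) (snd q)) \<in> L) \<and>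
     (\<forall>c. \<forall>p\<in>L. (c *\<^sub>R fst p, fscale c (snd p)) \<in> L)"

definition perp :: "nat \<Rightarrow> (('v::real_vector) \<times> 'v form) set \<Rightarrow> ('v \<times> 'v form) set" where
  "perp k L = {q. kform k (snd q) \<and> (\<forall>p\<in>L. pairing p q = fzero)}"

definition isotropic :: "nat \<Rightarrow> (('v::real_vector) \<times> 'v form) set \<Rightarrow> bool" where
  "isotropic k L \<longleftrightarrow> L \<subseteq> perp k L"

definition Ann :: "nat \<Rightarrow> ('v::real_vector) set \<Rightarrow> 'v form set" where
  "Ann k E = {\<alpha>. kform k \<alpha> \<and> (\<forall>Y\<in>E. contr Y \<alpha> = fzero)}"

text \<open>Elements of the quotient \<wedge>^k V^*/A are represented as cosets \<alpha> + A.\<close>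
definition coset :: "'v form set \<Rightarrow> 'v form \<Rightarrow> 'v form set" where
  "coset A \<alpha> = fadd \<alpha> ` A"

text \<open>A linear map \<epsilon> : E \<rightarrow> \<wedge>^k V^*/A (values outside E are irrelevant).\<close>
definition quot_linear_on :: "nat \<Rightarrow> ('v::real_vector) set \<Rightarrow> 'v form set \<Rightarrow> ('v \<Rightarrow> 'v form set) \<Rightarrow> bool" where
  "quot_linear_on k E A \<epsilon> \<longleftrightarrow>
     (\<forall>X\<in>E. \<exists>\<alpha>. kform k \<alpha> \<and> \<epsilon> X = coset A \<alpha>) \<and>
     (\<forall>X\<in>E. \<forall>Y\<in>E. \<forall>\<alpha>\<in>\<epsilon> X. \<forall>\<beta>\<in>\<epsilon> Y. \<epsilon> (X + Y) = coset A (fadd \<alpha> \<beta>)) \<and>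
     (\<forall>X\<in>E. \<forall>c. \<forall>\<alpha>\<in>\<epsilon> X. \<epsilon> (c *\<^sub>R X) = coset A (fscale c \<alpha>))"

text \<open>E-skew: i_Y(\<epsilon>(X)) = - i_X(\<epsilon>(Y)), computed on representatives
  (well defined since A \<subseteq> Ann(E)).\<close>
definition E_skew :: "('v::real_vector) set \<Rightarrow> ('v \<Rightarrow> 'v form set) \<Rightarrow> bool" where
  "E_skew E \<epsilon> \<longleftrightarrow>
     (\<forall>X\<in>E. \<forall>Y\<in>E. \<forall>\<alpha>\<in>\<epsilon> X. \<forall>\<beta>\<in>\<epsilon> Y. contr Y \<alpha> = fneg (contr X \<beta>))"

definition Lset :: "nat \<Rightarrow> ('v::real_vector) set \<Rightarrow> 'v form set \<Rightarrow> ('v \<Rightarrow> 'v form set) \<Rightarrow> ('v \<times> 'v form) set" where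
  "Lset k E A \<epsilon> = {(X, \<alpha>). X \<in> E \<and> kform k \<alpha> \<and> coset A \<alpha> = \<epsilon> X}"

end

theory Submission
  imports Defs
begin

lemma fadd_fzero[simp]: "fadd a fzero = a"
  by (simp add: fadd_def fzero_def)

lemma contr_zero:
  fixes b :: "('a::real_vector) form"
  assumes "kform k b" "1 \<le> k" shows "contr 0 b = fzero"
proof -
  have lin: "linear (\<lambda>x. b (vs(0 := x)))" for vs
    using assms unfolding kform_def by auto
  show ?thesis
  proof
    fix vs :: "nat \<Rightarrow> 'a"
    have "(\<lambda>i. if i = 0 then 0 else vs (i - 1)) = ((\<lambda>i. vs (i - 1))(0 := 0))"
      by auto
    then show "contr 0 b vs = fzero vs"
      using linear_0[OF lin[of "\<lambda>i. vs (i - 1)"]]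
      by (simp add: contr_def fzero_def)
  qed
qed

lemma coset_L:
  assumes S: "sum_subspace k L" and XL: "(X, a) \<in> L"
  shows "{b. (X, b) \<in> L} = coset {g. (0, g) \<in> L} a"
proof -
  have ad: "(fst p + fst q, fadd (snd p) (snd q)) \<in> L" if "p \<in> L" "q \<in> L" for p q
    using S that unfolding sum_subspace_def by blast
  have sc: "(c *\<^sub>R fst p, fscale c (snd p)) \<in> L" if "p \<in> L" for c p
    using S that unfolding sum_subspace_def by blast
  show ?thesis
  proof (intro set_eqI iffI)
    fix b assume "b \<in> {b. (X, b) \<in> L}"
    then have bL: "(X, b) \<in> L" by simp
    have m: "((-1) *\<^sub>R X, fscale (-1) a) \<in> L" using sc[OF XL, of "-1"] by simp
    then have "(X + (-1) *\<^sub>R X, fadd b (fscale (-1) a)) \<in> L"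
      using ad[OF bL m] by simp
    then have g: "(0, fadd b (fscale (-1) a)) \<in> L" by simp
    have "b = fadd a (fadd b (fscale (-1) a))"
      by (simp add: fadd_def fscale_def)
    then show "b \<in> coset {g. (0, g) \<in> L} a" using g unfolding coset_def by blast
  next
    fix b assume "b \<in> coset {g. (0, g) \<in> L} a"
    then obtain g where g: "(0, g) \<in> L" and b: "b = fadd a g" unfolding coset_def by blast
    have "(X + 0, fadd a g) \<in> L" using ad[OF XL g] by simp
    then show "b \<in> {b. (X, b) \<in> L}" using b by simp
  qed
qed

theorem proposition3p2:
  fixes n k :: nat
  assumes dimV: "DIM('v::euclidean_space) = n"
    and k1: "1 \<le> k" and kn: "k \<le> n - 1"
  shows "(\<forall>(E::'v set) A \<epsilon>.
            subspace E \<and> form_subspace k A \<and> A \<subseteq> Ann k E \<and>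
            quot_linear_on k E A \<epsilon> \<and> E_skew E \<epsilon>
            \<longrightarrow> isotropic k (Lset k E A \<epsilon>))
       \<and> (\<forall>L :: ('v \<times> 'v form) set.
            sum_subspace k L \<and> isotropic k L \<longrightarrow>
            (let E = fst ` L; AL = {\<alpha>. (0, \<alpha>) \<in> L}; \<epsilon> = (\<lambda>X. {\<alpha>. (X, \<alpha>) \<in> L})
             in subspace E \<and> form_subspace k AL \<and> AL \<subseteq> Ann k E \<and>
                quot_linear_on k E AL \<epsilon> \<and> E_skew E \<epsilon> \<and>
                L = Lset k E AL \<epsilon>))"
proof (intro conjI allI impI)
  fix E :: "'v set" and A \<epsilon>
  assume H: "subspace E \<and> form_subspace k A \<and> A \<subseteq> Ann k E \<and>
            quot_linear_on k E A \<epsilon> \<and> E_skew E \<epsilon>"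
  have mem: "a \<in> \<epsilon> X" if "(X, a) \<in> Lset k E A \<epsilon>" for X a
  proof -
    have "fzero \<in> A" using H unfolding form_subspace_def by blast
    then have "fadd a fzero \<in> coset A a" unfolding coset_def by blast
    then show ?thesis using that unfolding Lset_def by simp
  qed
  show "isotropic k (Lset k E A \<epsilon>)"
    unfolding isotropic_def perp_def
  proof (intro subsetI CollectI conjI ballI)
    fix q assume q: "q \<in> Lset k E A \<epsilon>"
    obtain X a where qq: "q = (X, a)" by force
    show "kform k (snd q)" using q unfolding qq Lset_def by simp
    fix p assume p: "p \<in> Lset k E A \<epsilon>"
    obtain Y b where pp: "p = (Y, b)" by force
    have "contr Y a = fneg (contr X b)"
      using H mem[OF q[unfolded qq]] mem[OF p[unfolded pp]] q p unfolding qq pp Lset_def E_skew_def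
      by auto
    then show "pairing p q = fzero"
      unfolding pp qq pairing_def by (auto simp: fadd_def fneg_def fzero_def)
  qed
next
  fix L :: "('v \<times> 'v form) set"
  assume H: "sum_subspace k L \<and> isotropic k L"
  then have S: "sum_subspace k L" and I: "L \<subseteq> perp k L" unfolding isotropic_def by auto
  have kf: "kform k a" if "(X, a) \<in> L" for X a using S that unfolding sum_subspace_def by force
  have z: "(0, fzero) \<in> L" using S unfolding sum_subspace_def by blast
  have ad: "(X + Y, fadd a b) \<in> L" if "(X, a) \<in> L" "(Y, b) \<in> L" for X Y a b
    using S that unfolding sum_subspace_def by force
  have sc: "(c *\<^sub>R X, fscale c a) \<in> L" if "(X, a) \<in> L" for c X a
    using S that unfolding sum_subspace_def by force
  have pz: "pairing p q = fzero" if "p \<in> L" "q \<in> L" for p q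
    using I that unfolding perp_def by blast
  let ?E = "fst ` L" and ?A = "{\<alpha>. (0, \<alpha>) \<in> L}" and ?e = "\<lambda>X. {\<alpha>. (X, \<alpha>) \<in> L}"
  have cs: "?e X = coset ?A a" if "(X, a) \<in> L" for X a using coset_L[OF S that] .
  have sub: "subspace ?E"
    unfolding subspace_def
  proof (intro conjI ballI allI)
    show "0 \<in> ?E" using z by force
  next
    fix x y assume "x \<in> ?E" "y \<in> ?E"
    then obtain a b where "(x, a) \<in> L" "(y, b) \<in> L" by force
    then show "x + y \<in> ?E" using ad by force
  next
    fix c x assume "x \<in> ?E"
    then obtain a where "(x, a) \<in> L" by force
    then show "c *\<^sub>R x \<in> ?E" using sc by force
  qed
  have fs: "form_subspace k ?A"
    unfolding form_subspace_def using kf z ad[of 0 _ 0] sc[of 0] by auto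
  have ann: "?A \<subseteq> Ann k ?E"
  proof
    fix a assume a: "a \<in> ?A"
    show "a \<in> Ann k ?E" unfolding Ann_def
    proof (intro CollectI conjI ballI)
      show "kform k a" using a kf by simp
      fix Y assume "Y \<in> ?E"
      then obtain b where b: "(Y, b) \<in> L" by force
      have "pairing (Y, b) (0, a) = fzero" using pz b a by simp
      then have "fadd (contr Y a) (contr 0 b) = fzero" unfolding pairing_def by simp
      then show "contr Y a = fzero" using contr_zero[OF kf[OF b] k1] by simp
    qed
  qed
  have ql: "quot_linear_on k ?E ?A ?e"
    unfolding quot_linear_on_def
  proof (intro conjI ballI allI)
    fix X assume "X \<in> ?E"
    then obtain a where a: "(X, a) \<in> L" by force
    show "\<exists>\<alpha>. kform k \<alpha> \<and> ?e X = coset ?A \<alpha>" using kf[OF a] cs[OF a] by blast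
  next
    fix X Y a b assume "a \<in> ?e X" "b \<in> ?e Y"
    then show "?e (X + Y) = coset ?A (fadd a b)" using cs ad by simp
  next
    fix X c a assume "a \<in> ?e X"
    then show "?e (c *\<^sub>R X) = coset ?A (fscale c a)" using cs sc by simp
  qed
  have sk: "E_skew ?E ?e"
    unfolding E_skew_def
  proof (intro ballI)
    fix X Y a b assume "a \<in> ?e X" "b \<in> ?e Y"
    then have "pairing (Y, b) (X, a) = fzero" using pz by simp
    then have "\<And>vs. contr Y a vs + contr X b vs = 0"
      unfolding pairing_def fadd_def fzero_def by (simp add: fun_eq_iff)
    then show "contr Y a = fneg (contr X b)"
      unfolding fneg_def by (intro ext) (simp add: eq_neg_iff_add_eq_0)
  qed
  have eq: "L = Lset k ?E ?A ?e"
  proof (intro set_eqI iffI)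
    fix p assume p: "p \<in> L"
    obtain X a where pp: "p = (X, a)" by force
    have pL: "(X, a) \<in> L" using p pp by simp
    have "X \<in> ?E" using pL by force
    then show "p \<in> Lset k ?E ?A ?e" using kf[OF pL] cs[OF pL] unfolding pp Lset_def by simp
  next
    fix p assume p: "p \<in> Lset k ?E ?A ?e"
    obtain X a where pp: "p = (X, a)" by force
    have c: "coset ?A a = ?e X" using p unfolding pp Lset_def by simp
    have "fadd a fzero \<in> coset ?A a" using z unfolding coset_def by blast
    then show "p \<in> L" using c unfolding pp by simp
  qed
  show "let E = ?E; AL = ?A; \<epsilon> = ?e
             in subspace E \<and> form_subspace k AL \<and> AL \<subseteq> Ann k E \<and>
                quot_linear_on k E AL \<epsilon> \<and> E_skew E \<epsilon> \<and>
                L = Lset k E AL \<epsilon>"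
    unfolding Let_def by (intro conjI sub fs ann ql sk eq)
qed

end
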